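(* Let $G$ be an infinite locally finite graph, $F$ a subgraph of $G$, and $D$ a finite connected graph. If $F$ is faithful to $G$, then $F\square D$ is faithful to $G\square D$ (where $F\square D$ is regarded as a subgraph of $G\square D$ in the natural way).
   Context: $\square$ denotes the Cartesian product of graphs. A ray is a one-way infinite path; two rays of a graph $H$ are equivalent in $H$ if for every finite $S\subseteq V(H)$ some component of $H-S$ contains tails of both; the classes are the ends of $H$. A subgraph $A$ of $B$ is faithful to $B$ if (i) every end of $B$ contains a ray of $A$, and (ii) any two rays of $A$ are equivalent in $A$ if and only if they are equivalent in $B$. *)

theory Defs
  imports Main
begin

text \<open>A (simple, undirected) graph is a pair of a vertex set and a set of ordered
  vertex pairs (each undirected edge stored in both directions).\<close>
type_synonym 'a graph = "'a set \<times> ('a \<times> 'a) set"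

abbreviation verts :: "'a graph \<Rightarrow> 'a set" where "verts H \<equiv> fst H"
abbreviation edges :: "'a graph \<Rightarrow> ('a \<times> 'a) set" where "edges H \<equiv> snd H"

definition is_graph :: "'a graph \<Rightarrow> bool" where
  "is_graph H \<longleftrightarrow> edges H \<subseteq> verts H \<times> verts H \<and> sym (edges H) \<and> irrefl (edges H)"

definition subgraph :: "'a graph \<Rightarrow> 'a graph \<Rightarrow> bool" where
  "subgraph A B \<longleftrightarrow> is_graph A \<and> is_graph B \<and> verts A \<subseteq> verts B \<and> edges A \<subseteq> edges B"

definition locally_finite :: "'a graph \<Rightarrow> bool" where
  "locally_finite H \<longleftrightarrow> (\<forall>v\<in>verts H. finite {u. (v, u) \<in> edges H})"

definition finite_graph :: "'a graph \<Rightarrow> bool" where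
  "finite_graph H \<longleftrightarrow> finite (verts H)"

definition connected_graph :: "'a graph \<Rightarrow> bool" where
  "connected_graph H \<longleftrightarrow> verts H \<noteq> {} \<and> (\<forall>u\<in>verts H. \<forall>v\<in>verts H. (u, v) \<in> (edges H)\<^sup>*)"

definition cart_prod :: "'a graph \<Rightarrow> 'b graph \<Rightarrow> ('a \<times> 'b) graph" (infixl "\<box>" 70) where
  "H \<box> K = (verts H \<times> verts K,
     {((a, b), (c, d)). (a = c \<and> a \<in> verts H \<and> (b, d) \<in> edges K)
                      \<or> (b = d \<and> b \<in> verts K \<and> (a, c) \<in> edges H)})"

definition is_ray :: "'a graph \<Rightarrow> (nat \<Rightarrow> 'a) \<Rightarrow> bool" where
  "is_ray H r \<longleftrightarrow> inj r \<and> (\<forall>i. r i \<in> verts H) \<and> (\<forall>i. (r i, r (Suc i)) \<in> edges H)"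

definition component_of :: "'a graph \<Rightarrow> 'a set \<Rightarrow> 'a \<Rightarrow> 'a set" where
  "component_of H S x =
     {y. (x, y) \<in> (edges H \<inter> ((verts H - S) \<times> (verts H - S)))\<^sup>*}"

definition has_tail_in :: "(nat \<Rightarrow> 'a) \<Rightarrow> 'a set \<Rightarrow> bool" where
  "has_tail_in r C \<longleftrightarrow> (\<exists>n. \<forall>i\<ge>n. r i \<in> C)"

definition ray_equiv :: "'a graph \<Rightarrow> (nat \<Rightarrow> 'a) \<Rightarrow> (nat \<Rightarrow> 'a) \<Rightarrow> bool" where
  "ray_equiv H r s \<longleftrightarrow>
     (\<forall>S. finite S \<and> S \<subseteq> verts H \<longrightarrow>
        (\<exists>x\<in>verts H - S. has_tail_in r (component_of H S x) \<and> has_tail_in s (component_of H S x)))"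

definition faithful :: "'a graph \<Rightarrow> 'a graph \<Rightarrow> bool" where
  "faithful A B \<longleftrightarrow>
     (\<forall>r. is_ray B r \<longrightarrow> (\<exists>s. is_ray A s \<and> ray_equiv B r s)) \<and>
     (\<forall>r s. is_ray A r \<and> is_ray A s \<longrightarrow> (ray_equiv A r s \<longleftrightarrow> ray_equiv B r s))"

end

theory Submission
  imports Defs
begin

lemma comp_sym:
  assumes "sym (edges H)" "y \<in> component_of H T x"
  shows "x \<in> component_of H T y"
proof -
  let ?R = "edges H \<inter> ((verts H - T) \<times> (verts H - T))"
  have "sym ?R" using assms(1) by (auto simp: sym_def)
  hence "sym (?R\<^sup>*)" by (rule sym_rtrancl)
  thus ?thesis using assms(2) unfolding component_of_def by (auto dest: symD)
qed

lemma comp_trans: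
  assumes "y \<in> component_of H T x" "z \<in> component_of H T y"
  shows "z \<in> component_of H T x"
  using assms unfolding component_of_def by auto

lemma ray_equiv_sym: "ray_equiv H p q \<Longrightarrow> ray_equiv H q p"
  unfolding ray_equiv_def by blast

lemma tails_common:
  assumes "has_tail_in q A" "has_tail_in q B"
  shows "\<exists>y. y \<in> A \<and> y \<in> B"
proof -
  obtain n where "\<forall>i\<ge>n. q i \<in> A" using assms(1) unfolding has_tail_in_def by blast
  moreover obtain m where "\<forall>i\<ge>m. q i \<in> B" using assms(2) unfolding has_tail_in_def by blast
  ultimately show ?thesis by (metis max.cobounded1 max.cobounded2)
qed

lemma has_tail_mono: "has_tail_in p A \<Longrightarrow> A \<subseteq> B \<Longrightarrow> has_tail_in p B"
  unfolding has_tail_in_def by blast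

lemma ray_equiv_trans:
  assumes "sym (edges H)" "ray_equiv H p q" "ray_equiv H q s"
  shows "ray_equiv H p s"
  unfolding ray_equiv_def
proof (intro allI impI)
  fix T assume T: "finite T \<and> T \<subseteq> verts H"
  obtain x where x: "x \<in> verts H - T" "has_tail_in p (component_of H T x)"
    "has_tail_in q (component_of H T x)"
    using assms(2) T unfolding ray_equiv_def by blast
  obtain x' where x': "x' \<in> verts H - T" "has_tail_in q (component_of H T x')"
    "has_tail_in s (component_of H T x')"
    using assms(3) T unfolding ray_equiv_def by blast
  obtain y where y: "y \<in> component_of H T x" "y \<in> component_of H T x'"
    using tails_common[OF x(3) x'(2)] by blast
  have "x' \<in> component_of H T x" using comp_trans[OF y(1) comp_sym[OF assms(1) y(2)]] .
  hence sub: "component_of H T x' \<subseteq> component_of H T x" using comp_trans[of _ H T x] by blast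
  show "\<exists>x\<in>verts H - T. has_tail_in p (component_of H T x) \<and> has_tail_in s (component_of H T x)"
  proof (intro bexI conjI)
    show "has_tail_in p (component_of H T x)" by (rule x(2))
    show "has_tail_in s (component_of H T x)" by (rule has_tail_mono[OF x'(3) \<open>component_of H T x' \<subseteq> component_of H T x\<close>])
    show "x \<in> verts H - T" by (rule x(1))
  qed
qed

definition lv :: "(nat \<Rightarrow> 'a) \<Rightarrow> nat \<Rightarrow> nat" where
  "lv W i = Max {j. W j = W i}"

primrec lt :: "(nat \<Rightarrow> 'a) \<Rightarrow> nat \<Rightarrow> nat" where
  "lt W 0 = lv W 0"
| "lt W (Suc k) = lv W (Suc (lt W k))"

lemma lv_props:
  assumes "\<forall>v. finite {i. W i = v}"
  shows "i \<le> lv W i" "W (lv W i) = W i" "\<And>j. lv W i < j \<Longrightarrow> W j \<noteq> W i"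
proof -
  have f: "finite {j. W j = W i}" using assms by blast
  have m: "i \<in> {j. W j = W i}" by simp
  show "i \<le> lv W i" unfolding lv_def using Max_ge[OF f m] .
  show "W (lv W i) = W i" unfolding lv_def using Max_in[OF f] m by blast
  show "\<And>j. lv W i < j \<Longrightarrow> W j \<noteq> W i" unfolding lv_def using Max_ge[OF f] by fastforce
qed

lemma lt_mono:
  assumes "\<forall>v. finite {i. W i = v}"
  shows "lt W k < lt W (Suc k)"
  using lv_props(1)[OF assms, of "Suc (lt W k)"] by simp

lemma lt_smono:
  assumes "\<forall>v. finite {i. W i = v}"
  shows "strict_mono (lt W)"
  using lt_mono[OF assms] by (simp add: strict_mono_Suc_iff)

lemma lt_last:
  assumes "\<forall>v. finite {i. W i = v}" "lt W k < j"
  shows "W j \<noteq> W (lt W k)"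
proof (cases k)
  case 0
  then show ?thesis using lv_props[OF assms(1), of 0] assms(2) by simp
next
  case (Suc m)
  then show ?thesis using lv_props[OF assms(1), of "Suc (lt W m)"] assms(2) by simp
qed

lemma lt_next:
  assumes "\<forall>v. finite {i. W i = v}"
  shows "W (lt W (Suc k)) = W (Suc (lt W k))"
  using lv_props(2)[OF assms] by simp

definition walk_in :: "'a graph \<Rightarrow> (nat \<Rightarrow> 'a) \<Rightarrow> bool" where
  "walk_in H W \<longleftrightarrow> (\<forall>i. W i \<in> verts H) \<and>
     (\<forall>i. W i = W (Suc i) \<or> (W i, W (Suc i)) \<in> edges H)"

lemma le_ray:
  assumes "\<forall>v. finite {i. W i = v}" "walk_in H W"
  shows "is_ray H (W \<circ> lt W)"
proof -
  have sm: "strict_mono (lt W)" using lt_smono[OF assms(1)] .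
  have "inj (W \<circ> lt W)"
  proof (rule injI)
    fix a b assume e: "(W \<circ> lt W) a = (W \<circ> lt W) b"
    show "a = b"
    proof (rule ccontr)
      assume "a \<noteq> b"
      then consider "a < b" | "b < a" by linarith
      then show False
      proof cases
        case 1
        then have "lt W a < lt W b" using sm by (simp add: strict_mono_less)
        then show False using lt_last[OF assms(1)] e by fastforce
      next
        case 2
        then have "lt W b < lt W a" using sm by (simp add: strict_mono_less)
        then show False using lt_last[OF assms(1)] e by fastforce
      qed
    qed
  qed
  moreover have "\<forall>i. (W \<circ> lt W) i \<in> verts H" using assms(2) unfolding walk_in_def by simp
  moreover have "\<forall>i. ((W \<circ> lt W) i, (W \<circ> lt W) (Suc i)) \<in> edges H"
  proof
    fix i
    have ne: "W (Suc (lt W i)) \<noteq> W (lt W i)" using lt_last[OF assms(1)] by simp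
    have "W (lt W i) = W (Suc (lt W i)) \<or> (W (lt W i), W (Suc (lt W i))) \<in> edges H"
      using assms(2) unfolding walk_in_def by blast
    then show "((W \<circ> lt W) i, (W \<circ> lt W) (Suc i)) \<in> edges H"
      using ne lt_next[OF assms(1)] by auto
  qed
  ultimately show ?thesis unfolding is_ray_def by blast
qed

lemma walk_tail:
  assumes "walk_in H W" "\<forall>i\<ge>N. W i \<notin> T"
  shows "i \<ge> N \<Longrightarrow> W i \<in> component_of H T (W N)"
proof (induction i rule: dec_induct)
  case base
  then show ?case unfolding component_of_def by simp
next
  case (step i)
  have "W i = W (Suc i) \<or> (W i, W (Suc i)) \<in> edges H" "W i \<in> verts H" "W (Suc i) \<in> verts H"
    using assms(1) unfolding walk_in_def by blast+
  moreover have "W i \<notin> T" "W (Suc i) \<notin> T" using assms(2) step(1) by auto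
  ultimately show ?case using step(3) unfolding component_of_def
    by (auto intro: rtrancl_into_rtrancl)
qed

lemma le_equiv:
  assumes "\<forall>v. finite {i. W i = v}" "walk_in H W"
  shows "ray_equiv H W (W \<circ> lt W)"
  unfolding ray_equiv_def
proof (intro allI impI)
  fix T assume T: "finite T \<and> T \<subseteq> verts H"
  have "{i. W i \<in> T} = (\<Union>v\<in>T. {i. W i = v})" by auto
  hence fin: "finite {i. W i \<in> T}" using T assms(1) by auto
  obtain N where N: "\<forall>i\<ge>N. W i \<notin> T"
  proof -
    obtain N where "\<forall>i\<in>{i. W i \<in> T}. i < N" using fin finite_nat_set_iff_bounded by blast
    then show ?thesis using that[of N] by (meson mem_Collect_eq not_le)
  qed
  have x: "W N \<in> verts H - T" using N assms(2) unfolding walk_in_def by auto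
  have t1: "has_tail_in W (component_of H T (W N))"
    unfolding has_tail_in_def using walk_tail[OF assms(2) N] by blast
  have "\<forall>k\<ge>N. (W \<circ> lt W) k \<in> component_of H T (W N)"
  proof (intro allI impI)
    fix k assume "N \<le> k"
    moreover have "k \<le> lt W k" using lt_smono[OF assms(1)] by (rule strict_mono_imp_increasing)
    ultimately show "(W \<circ> lt W) k \<in> component_of H T (W N)"
      using walk_tail[OF assms(2) N] by simp
  qed
  hence "has_tail_in (W \<circ> lt W) (component_of H T (W N))" unfolding has_tail_in_def by blast
  then show "\<exists>x\<in>verts H - T. has_tail_in W (component_of H T x) \<and>
    has_tail_in (W \<circ> lt W) (component_of H T x)" using x t1 by blast
qed


lemma cart_edge_cases:
  assumes "((a, b), (c, d)) \<in> edges (H \<box> K)"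
  shows "(a = c \<and> a \<in> verts H \<and> (b, d) \<in> edges K) \<or> (b = d \<and> b \<in> verts K \<and> (a, c) \<in> edges H)"
  using assms unfolding cart_prod_def by simp

lemma prod_comp_fst:
  assumes "y \<in> component_of (H \<box> D) (T \<times> verts D) x"
  shows "fst y \<in> component_of H T (fst x)"
proof -
  have "(x, y) \<in> (edges (H \<box> D) \<inter> ((verts (H \<box> D) - T \<times> verts D) \<times> (verts (H \<box> D) - T \<times> verts D)))\<^sup>*"
    using assms unfolding component_of_def by simp
  then show ?thesis
  proof (induction rule: rtrancl_induct)
    case base
    then show ?case unfolding component_of_def by simp
  next
    case (step y z)
    obtain a b c d where yz: "y = (a, b)" "z = (c, d)" by (cases y, cases z) auto
    have e: "((a, b), (c, d)) \<in> edges (H \<box> D)" and v: "(a,b) \<in> verts (H \<box> D) - T \<times> verts D"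
      "(c,d) \<in> verts (H \<box> D) - T \<times> verts D" using step(2) yz by auto
    have v2: "a \<in> verts H - T" "c \<in> verts H - T" using v unfolding cart_prod_def by auto
    from cart_edge_cases[OF e] show ?case
    proof
      assume "a = c \<and> a \<in> verts H \<and> (b, d) \<in> edges D"
      then show ?case using step(3) yz by simp
    next
      assume "b = d \<and> b \<in> verts D \<and> (a, c) \<in> edges H"
      then show ?case using step(3) yz v2 unfolding component_of_def
        by (auto intro: rtrancl_into_rtrancl)
    qed
  qed
qed

lemma lift_H:
  assumes "a \<in> component_of H T x" "x \<in> verts H - T" "fst ` S \<subseteq> T" "d0 \<in> verts D"
  shows "(a, d0) \<in> component_of (H \<box> D) S (x, d0)"
proof -
  have "(x, a) \<in> (edges H \<inter> ((verts H - T) \<times> (verts H - T)))\<^sup>*"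
    using assms(1) unfolding component_of_def by simp
  then show ?thesis
  proof (induction rule: rtrancl_induct)
    case base
    then show ?case unfolding component_of_def by simp
  next
    case (step b c)
    have "((b, d0), (c, d0)) \<in> edges (H \<box> D)" using step(2) assms(4) unfolding cart_prod_def by auto
    moreover have "(b, d0) \<in> verts (H \<box> D) - S" "(c, d0) \<in> verts (H \<box> D) - S"
      using step(2) assms(3,4) unfolding cart_prod_def by force+
    ultimately show ?case using step(3) unfolding component_of_def
      by (auto intro: rtrancl_into_rtrancl)
  qed
qed

lemma lift_D:
  assumes "(d0, d) \<in> (edges D)\<^sup>*" "is_graph D" "a \<in> verts H - T" "fst ` S \<subseteq> T"
  shows "(a, d) \<in> component_of (H \<box> D) S (a, d0)"
  using assms(1)
proof (induction rule: rtrancl_induct)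
  case base
  then show ?case unfolding component_of_def by simp
next
  case (step b c)
  have bc: "b \<in> verts D" "c \<in> verts D" using step(2) assms(2) unfolding is_graph_def by auto
  have "((a, b), (a, c)) \<in> edges (H \<box> D)" using step(2) assms(3) unfolding cart_prod_def by auto
  moreover have "(a, b) \<in> verts (H \<box> D) - S" "(a, c) \<in> verts (H \<box> D) - S"
    using bc assms(3,4) unfolding cart_prod_def by force+
  ultimately show ?case using step(3) unfolding component_of_def
    by (auto intro: rtrancl_into_rtrancl)
qed

lemma comp_in_verts:
  assumes "y \<in> component_of H T x" "y \<noteq> x"
  shows "y \<in> verts H - T"
proof -
  have "(x, y) \<in> (edges H \<inter> ((verts H - T) \<times> (verts H - T)))\<^sup>*"
    using assms(1) unfolding component_of_def by simp
  then show ?thesis using assms(2) by (cases rule: rtrancl.cases) auto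
qed

lemma lift_comp:
  assumes "is_graph D" "connected_graph D" "d0 \<in> verts D"
    "x \<in> verts H - T" "fst ` S \<subseteq> T" "y \<in> verts (H \<box> D)" "fst y \<in> component_of H T x"
  shows "y \<in> component_of (H \<box> D) S (x, d0)"
proof -
  obtain a d where y: "y = (a, d)" by (cases y)
  have d: "d \<in> verts D" using assms(6) y unfolding cart_prod_def by auto
  have a: "a \<in> verts H - T" using comp_in_verts[of a H T x] assms(4,7) y by (cases "a = x") auto
  have "(d0, d) \<in> (edges D)\<^sup>*" using assms(2,3) d unfolding connected_graph_def by blast
  from comp_trans[OF lift_H[OF _ assms(4,5,3)] lift_D[OF this assms(1) a assms(5)]]
  show ?thesis using assms(7) y by simp
qed

lemma lemmaA:
  assumes "is_graph D" "finite_graph D" "connected_graph D"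
    "\<forall>i. R i \<in> verts (H \<box> D)" "\<forall>i. R' i \<in> verts (H \<box> D)"
  shows "ray_equiv (H \<box> D) R R' \<longleftrightarrow> ray_equiv H (fst \<circ> R) (fst \<circ> R')"
proof
  assume A: "ray_equiv (H \<box> D) R R'"
  show "ray_equiv H (fst \<circ> R) (fst \<circ> R')"
    unfolding ray_equiv_def
  proof (intro allI impI)
    fix T assume T: "finite T \<and> T \<subseteq> verts H"
    have "finite (T \<times> verts D)" using T assms(2) unfolding finite_graph_def by simp
    moreover have "T \<times> verts D \<subseteq> verts (H \<box> D)" using T unfolding cart_prod_def by auto
    ultimately obtain x where x: "x \<in> verts (H \<box> D) - T \<times> verts D"
      "has_tail_in R (component_of (H \<box> D) (T \<times> verts D) x)"
      "has_tail_in R' (component_of (H \<box> D) (T \<times> verts D) x)"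
      using A unfolding ray_equiv_def by blast
    have "fst x \<in> verts H - T" using x(1) unfolding cart_prod_def by auto
    moreover have "has_tail_in (fst \<circ> R) (component_of H T (fst x))"
    proof -
      obtain n where n: "\<forall>i\<ge>n. R i \<in> component_of (H \<box> D) (T \<times> verts D) x"
        using x(2) unfolding has_tail_in_def by blast
      have "\<forall>i\<ge>n. (fst \<circ> R) i \<in> component_of H T (fst x)"
        using n prod_comp_fst[of _ H D T x] by simp
      thus ?thesis unfolding has_tail_in_def by blast
    qed
    moreover have "has_tail_in (fst \<circ> R') (component_of H T (fst x))"
    proof -
      obtain n where n: "\<forall>i\<ge>n. R' i \<in> component_of (H \<box> D) (T \<times> verts D) x"
        using x(3) unfolding has_tail_in_def by blast
      have "\<forall>i\<ge>n. (fst \<circ> R') i \<in> component_of H T (fst x)"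
        using n prod_comp_fst[of _ H D T x] by simp
      thus ?thesis unfolding has_tail_in_def by blast
    qed
    ultimately show "\<exists>x\<in>verts H - T. has_tail_in (fst \<circ> R) (component_of H T x) \<and>
      has_tail_in (fst \<circ> R') (component_of H T x)" by blast
  qed
next
  assume A: "ray_equiv H (fst \<circ> R) (fst \<circ> R')"
  obtain d0 where d0: "d0 \<in> verts D" using assms(3) unfolding connected_graph_def by blast
  show "ray_equiv (H \<box> D) R R'"
    unfolding ray_equiv_def
  proof (intro allI impI)
    fix S assume S: "finite S \<and> S \<subseteq> verts (H \<box> D)"
    have T: "finite (fst ` S)" "fst ` S \<subseteq> verts H" using S unfolding cart_prod_def by auto
    then obtain x where x: "x \<in> verts H - fst ` S"
      "has_tail_in (fst \<circ> R) (component_of H (fst ` S) x)"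
      "has_tail_in (fst \<circ> R') (component_of H (fst ` S) x)"
      using A unfolding ray_equiv_def by blast
    have xd: "(x, d0) \<in> verts (H \<box> D) - S"
    proof -
      have "x \<in> verts H" "x \<notin> fst ` S" using x(1) by auto
      hence "(x, d0) \<notin> S" by force
      moreover have "(x, d0) \<in> verts (H \<box> D)" using \<open>x \<in> verts H\<close> d0 unfolding cart_prod_def by simp
      ultimately show ?thesis by blast
    qed
    have L: "\<And>y. y \<in> verts (H \<box> D) \<Longrightarrow> fst y \<in> component_of H (fst ` S) x \<Longrightarrow>
        y \<in> component_of (H \<box> D) S (x, d0)"
      by (rule lift_comp[OF assms(1,3) d0 x(1) subset_refl])
    have "has_tail_in R (component_of (H \<box> D) S (x, d0))"
    proof -
      obtain n where n: "\<forall>i\<ge>n. (fst \<circ> R) i \<in> component_of H (fst ` S) x"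
        using x(2) unfolding has_tail_in_def by blast
      have "\<forall>i\<ge>n. R i \<in> component_of (H \<box> D) S (x, d0)"
        using n L assms(4) by simp
      thus ?thesis unfolding has_tail_in_def by blast
    qed
    moreover have "has_tail_in R' (component_of (H \<box> D) S (x, d0))"
    proof -
      obtain n where n: "\<forall>i\<ge>n. (fst \<circ> R') i \<in> component_of H (fst ` S) x"
        using x(3) unfolding has_tail_in_def by blast
      have "\<forall>i\<ge>n. R' i \<in> component_of (H \<box> D) S (x, d0)"
        using n L assms(5) by simp
      thus ?thesis unfolding has_tail_in_def by blast
    qed
    ultimately show "\<exists>x\<in>verts (H \<box> D) - S. has_tail_in R (component_of (H \<box> D) S x) \<and>
      has_tail_in R' (component_of (H \<box> D) S x)" using xd by blast
  qed
qed


lemma ray_fst_walk: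
  assumes "is_ray (H \<box> D) R"
  shows "walk_in H (fst \<circ> R)"
  unfolding walk_in_def
proof (intro conjI allI)
  fix i
  have "R i \<in> verts H \<times> verts D" using assms unfolding is_ray_def cart_prod_def by simp
  then show "(fst \<circ> R) i \<in> verts H" by (auto simp: mem_Times_iff)
  obtain a b c d where e: "R i = (a, b)" "R (Suc i) = (c, d)" by (cases "R i", cases "R (Suc i)") auto
  have "((a, b), (c, d)) \<in> edges (H \<box> D)" using assms e unfolding is_ray_def by metis
  from cart_edge_cases[OF this]
  show "(fst \<circ> R) i = (fst \<circ> R) (Suc i) \<or> ((fst \<circ> R) i, (fst \<circ> R) (Suc i)) \<in> edges H"
    using e by auto
qed

lemma ray_fst_fin:
  assumes "is_ray (H \<box> D) R" "finite_graph D"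
  shows "\<forall>v. finite {i. (fst \<circ> R) i = v}"
proof
  fix v
  have "\<forall>i. R i \<in> verts H \<times> verts D" using assms(1) unfolding is_ray_def cart_prod_def by simp
  hence "{i. (fst \<circ> R) i = v} \<subseteq> R -` ({v} \<times> verts D)"
    by (auto simp: mem_Times_iff)
  moreover have "finite ({v} \<times> verts D)" using assms(2) unfolding finite_graph_def by simp
  hence "finite (R -` ({v} \<times> verts D))"
    using assms(1) unfolding is_ray_def by (intro finite_vimageI) auto
  ultimately show "finite {i. (fst \<circ> R) i = v}" by (rule finite_subset)
qed

lemma walk_sub: "walk_in F W \<Longrightarrow> subgraph F G \<Longrightarrow> walk_in G W"
  unfolding walk_in_def subgraph_def by blast

lemma prod_graph: "is_graph H \<Longrightarrow> is_graph D \<Longrightarrow> is_graph (H \<box> D)"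
  unfolding is_graph_def cart_prod_def sym_def irrefl_def by auto

lemma ray_verts_sub: 
  assumes "is_ray (F \<box> D) R" "subgraph F G" shows "\<forall>i. R i \<in> verts (G \<box> D)"
proof -
  have "\<forall>i. R i \<in> verts F \<times> verts D" using assms(1) unfolding is_ray_def cart_prod_def by simp
  moreover have "verts F \<subseteq> verts G" using assms(2) unfolding subgraph_def by blast
  ultimately show ?thesis unfolding cart_prod_def by (auto simp: mem_Times_iff)
qed

theorem lemma18:
  fixes G F :: "'a graph" and D :: "'b graph"
  assumes "is_graph G" and "infinite (verts G)" and "locally_finite G"
    and "subgraph F G"
    and "is_graph D" and "finite_graph D" and "connected_graph D"
    and "faithful F G"
  shows "subgraph (F \<box> D) (G \<box> D) \<and> faithful (F \<box> D) (G \<box> D)"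
proof -
  have gF: "is_graph F" using assms(4) unfolding subgraph_def by blast
  have symG: "sym (edges G)" using assms(1) unfolding is_graph_def by blast
  have symF: "sym (edges F)" using gF unfolding is_graph_def by blast
  have sub: "subgraph (F \<box> D) (G \<box> D)"
    using prod_graph[OF gF assms(5)] prod_graph[OF assms(1,5)] assms(4)
    unfolding subgraph_def cart_prod_def by auto
  obtain d0 where d0: "d0 \<in> verts D" using assms(7) unfolding connected_graph_def by blast
  have p1: "\<exists>s. is_ray (F \<box> D) s \<and> ray_equiv (G \<box> D) R s" if R: "is_ray (G \<box> D) R" for R
  proof -
    let ?W = "fst \<circ> R"
    have w: "walk_in G ?W" and f: "\<forall>v. finite {i. ?W i = v}"
      using ray_fst_walk[OF R] ray_fst_fin[OF R assms(6)] by auto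
    have r: "is_ray G (?W \<circ> lt ?W)" "ray_equiv G ?W (?W \<circ> lt ?W)"
      using le_ray[OF f w] le_equiv[OF f w] by auto
    obtain s where s: "is_ray F s" "ray_equiv G (?W \<circ> lt ?W) s"
      using assms(8) r(1) unfolding faithful_def by blast
    have ws: "ray_equiv G ?W s" using ray_equiv_trans[OF symG r(2) s(2)] .
    define S' where "S' = (\<lambda>i. (s i, d0))"
    have rS: "is_ray (F \<box> D) S'"
      using s(1) d0 unfolding is_ray_def S'_def cart_prod_def inj_def by auto
    have "ray_equiv (G \<box> D) R S'"
      using lemmaA[OF assms(5,6,7), of R G S'] R ray_verts_sub[OF rS assms(4)] ws
      unfolding is_ray_def S'_def by (simp add: comp_def)
    then show ?thesis using rS by blast
  qed
  have p2: "ray_equiv (F \<box> D) R R' \<longleftrightarrow> ray_equiv (G \<box> D) R R'"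
    if R: "is_ray (F \<box> D) R" and R': "is_ray (F \<box> D) R'" for R R'
  proof -
    let ?W = "fst \<circ> R" and ?W' = "fst \<circ> R'"
    have w: "walk_in F ?W" and f: "\<forall>v. finite {i. ?W i = v}"
      using ray_fst_walk[OF R] ray_fst_fin[OF R assms(6)] by auto
    have w': "walk_in F ?W'" and f': "\<forall>v. finite {i. ?W' i = v}"
      using ray_fst_walk[OF R'] ray_fst_fin[OF R' assms(6)] by auto
    have wG: "walk_in G ?W" "walk_in G ?W'" using walk_sub[OF w assms(4)] walk_sub[OF w' assms(4)] by auto
    define r where "r = ?W \<circ> lt ?W"
    define r' where "r' = ?W' \<circ> lt ?W'"
    have rr: "is_ray F r" "is_ray F r'" unfolding r_def r'_def using le_ray[OF f w] le_ray[OF f' w'] by auto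
    have eF: "ray_equiv F ?W r" "ray_equiv F ?W' r'" unfolding r_def r'_def using le_equiv[OF f w] le_equiv[OF f' w'] by auto
    have eG: "ray_equiv G ?W r" "ray_equiv G ?W' r'" unfolding r_def r'_def using le_equiv[OF f wG(1)] le_equiv[OF f' wG(2)] by auto
    have vF: "\<forall>i. R i \<in> verts (F \<box> D)" "\<forall>i. R' i \<in> verts (F \<box> D)" using R R' unfolding is_ray_def by auto
    have vG: "\<forall>i. R i \<in> verts (G \<box> D)" "\<forall>i. R' i \<in> verts (G \<box> D)"
      using ray_verts_sub[OF R assms(4)] ray_verts_sub[OF R' assms(4)] by auto
    have "ray_equiv F ?W ?W' \<longleftrightarrow> ray_equiv F r r'"
      using ray_equiv_trans[OF symF] ray_equiv_sym eF by metis
    also have "\<dots> \<longleftrightarrow> ray_equiv G r r'" using assms(8) rr unfolding faithful_def by blast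
    also have "\<dots> \<longleftrightarrow> ray_equiv G ?W ?W'"
      using ray_equiv_trans[OF symG] ray_equiv_sym eG by metis
    finally show ?thesis using lemmaA[OF assms(5,6,7) vF] lemmaA[OF assms(5,6,7) vG] by simp
  qed
  show ?thesis using sub p1 p2 unfolding faithful_def by blast
qed

end
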